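(* Let $\tau\in\mathbb{C}$. The functional $I_{\overline{\mathcal{T}}}:\phi\mapsto\beta_{f_\phi}(\tau)$ is continuous on $\overline{\mathcal{T}}$ (closure taken in the Banach space $E_1$).
   Context: $\Delta$ is the unit disk. $E_1$ is the Banach space of analytic $\phi$ on $\Delta$ with $\|\phi\|_{E_1}=\sup_{z\in\Delta}|\phi(z)|(1-|z|^2)<\infty$. For locally univalent $f$, $N_f=f''/f'$. $\mathcal{S}_q$ is the class of bounded univalent $f$ on $\Delta$ with $f(0)=0,f'(0)=1$ admitting a quasiconformal extension to $\widehat{\mathbb{C}}$. $\mathcal{T}=\{N_f:f\in\mathcal{S}_q\}\subset E_1$ and $\overline{\mathcal{T}}$ is its closure in $E_1$. For $\phi\in\overline{\mathcal{T}}$, $f_\phi(z)=\int_0^z\exp\left(\int_0^\zeta\phi(w)dw\right)d\zeta$; this is univalent in $\Delta$ with $f_\phi(0)=0,f_\phi'(0)=1$ and $N_{f_\phi}=\phi$. For such $f$ and $\tau\in\mathbb{C}$, $[f'(z)]^\tau=\exp(\tau\log f'(z))$ with $\log f'(0)=0$, and $\beta_f(\tau)=\limsup_{r\to1^-}\frac{\log\int_{-\pi}^{\pi}|[f'(re^{i\theta})]^\tau|d\theta}{|\log(1-r)|}$. *)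

theory Defs
  imports "HOL-Complex_Analysis.Complex_Analysis"
begin

abbreviation Disk :: "complex set" where "Disk \<equiv> ball 0 1"

text \<open>Metric definition of quasiconformality (Gehring/Vaisala): for a homeomorphism F,
  H_F(z) = limsup_{r->0+} L_F(z,r)/l_F(z,r), where L (resp. l) is the max (resp. min)
  of |F w - F z| over |w - z| = r; F is quasiconformal iff H_F is bounded.\<close>
definition qc_Lmax :: "(complex \<Rightarrow> complex) \<Rightarrow> complex \<Rightarrow> real \<Rightarrow> real" where
  "qc_Lmax F z r = Sup ((\<lambda>w. cmod (F w - F z)) ` sphere z r)"

definition qc_lmin :: "(complex \<Rightarrow> complex) \<Rightarrow> complex \<Rightarrow> real \<Rightarrow> real" where
  "qc_lmin F z r = Inf ((\<lambda>w. cmod (F w - F z)) ` sphere z r)"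

definition qc_dilatation :: "(complex \<Rightarrow> complex) \<Rightarrow> complex \<Rightarrow> ereal" where
  "qc_dilatation F z = Limsup (at_right 0) (\<lambda>r. ereal (qc_Lmax F z r / qc_lmin F z r))"

definition quasiconformal :: "(complex \<Rightarrow> complex) \<Rightarrow> bool" where
  "quasiconformal F \<longleftrightarrow> (\<exists>G. homeomorphism UNIV UNIV F G) \<and>
     (\<exists>K::real. \<forall>z. qc_dilatation F z \<le> ereal K)"

definition Sq :: "(complex \<Rightarrow> complex) set" where
  "Sq = {f. f holomorphic_on Disk \<and> inj_on f Disk \<and> bounded (f ` Disk) \<and>
            f 0 = 0 \<and> deriv f 0 = 1 \<and>
            (\<exists>F. quasiconformal F \<and> (\<forall>z\<in>Disk. F z = f z))}"

definition preschwarz :: "(complex \<Rightarrow> complex) \<Rightarrow> complex \<Rightarrow> complex" where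
  "preschwarz f z = deriv (deriv f) z / deriv f z"

text \<open>The weighted sup-norm of E_1 (extended-real valued, = \<infinity> outside E_1).\<close>
definition E1norm :: "(complex \<Rightarrow> complex) \<Rightarrow> ereal" where
  "E1norm \<phi> = (SUP z\<in>Disk. ereal (cmod (\<phi> z) * (1 - (cmod z)\<^sup>2)))"

definition E1 :: "(complex \<Rightarrow> complex) set" where
  "E1 = {\<phi>. \<phi> holomorphic_on Disk \<and> E1norm \<phi> < \<infinity>}"

definition TT :: "(complex \<Rightarrow> complex) set" where
  "TT = preschwarz ` Sq"

definition TT_closure :: "(complex \<Rightarrow> complex) set" where
  "TT_closure = {\<phi>\<in>E1. \<forall>e>0. \<exists>\<psi>\<in>TT. E1norm (\<lambda>z. \<phi> z - \<psi> z) < ereal e}"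

definition f_of :: "(complex \<Rightarrow> complex) \<Rightarrow> complex \<Rightarrow> complex" where
  "f_of \<phi> z = contour_integral (linepath 0 z)
      (\<lambda>\<zeta>. exp (contour_integral (linepath 0 \<zeta>) \<phi>))"

definition logderiv_branch :: "(complex \<Rightarrow> complex) \<Rightarrow> complex \<Rightarrow> complex" where
  "logderiv_branch f = (SOME g. g holomorphic_on Disk \<and> g 0 = 0 \<and>
                           (\<forall>z\<in>Disk. exp (g z) = deriv f z))"

definition deriv_pow :: "(complex \<Rightarrow> complex) \<Rightarrow> complex \<Rightarrow> complex \<Rightarrow> complex" where
  "deriv_pow f \<tau> z = exp (\<tau> * logderiv_branch f z)"

definition beta :: "(complex \<Rightarrow> complex) \<Rightarrow> complex \<Rightarrow> ereal" where
  "beta f \<tau> = Limsup (at_left 1)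
     (\<lambda>r::real. ereal (ln (integral {-pi..pi} (\<lambda>\<theta>. cmod (deriv_pow f \<tau> (complex_of_real r * cis \<theta>))))
                       / \<bar>ln (1 - r)\<bar>))"

end

theory Submission
  imports Defs
begin

lemma disk_prim:
  fixes \<phi> :: "complex \<Rightarrow> complex"
  assumes holo: "\<phi> holomorphic_on Disk" and z: "z \<in> Disk"
  shows "((\<lambda>z. contour_integral (linepath 0 z) \<phi>) has_field_derivative \<phi> z) (at z)"
proof (rule triangle_contour_integrals_starlike_primitive[where S=Disk])
  show "continuous_on Disk \<phi>" using holo holomorphic_on_imp_continuous_on by blast
  show "(0::complex) \<in> Disk" by simp
  show "open Disk" by simp
  show "z \<in> Disk" by fact
  show "closed_segment 0 y \<subseteq> Disk" if "y \<in> Disk" for y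
    using that convex_ball[of "0::complex" 1] by (simp add: closed_segment_subset)
  show "contour_integral (linepath 0 b) \<phi> + contour_integral (linepath b c) \<phi> +
          contour_integral (linepath c 0) \<phi> = 0" if "closed_segment b c \<subseteq> Disk" for b c
  proof -
    have bc: "b \<in> Disk" "c \<in> Disk" using that by auto
    have "(\<phi> has_contour_integral 0) (linepath 0 b +++ linepath b c +++ linepath c 0)"
      by (rule Cauchy_theorem_convex_simple[OF holo convex_ball]) (use bc in \<open>auto simp: path_image_join closed_segment_subset\<close>)
    then show ?thesis
      using has_chain_integral_chain_integral3 by blast
  qed
qed

definition Lp :: "(complex \<Rightarrow> complex) \<Rightarrow> complex \<Rightarrow> complex" where
  "Lp \<phi> z = contour_integral (linepath 0 z) \<phi>"

lemma Lp_deriv: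
  assumes "\<phi> holomorphic_on Disk" "z \<in> Disk"
  shows "(Lp \<phi> has_field_derivative \<phi> z) (at z)"
  using disk_prim[OF assms] by (simp add: Lp_def[abs_def])

lemma Lp_holo:
  assumes "\<phi> holomorphic_on Disk"
  shows "Lp \<phi> holomorphic_on Disk"
  unfolding holomorphic_on_open[OF open_ball] using Lp_deriv[OF assms] by blast

lemma Lp_0: "Lp \<phi> 0 = 0"
  unfolding Lp_def by (rule contour_integral_unique) simp

lemma f_of_eq: "f_of \<phi> = Lp (\<lambda>\<zeta>. exp (Lp \<phi> \<zeta>))"
  by (auto simp: f_of_def Lp_def[abs_def])

lemma f_of_deriv:
  assumes "\<phi> holomorphic_on Disk" "z \<in> Disk"
  shows "deriv (f_of \<phi>) z = exp (Lp \<phi> z)"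
proof -
  have "(\<lambda>\<zeta>. exp (Lp \<phi> \<zeta>)) holomorphic_on Disk"
    using Lp_holo[OF assms(1)] by (intro holomorphic_intros)
  from Lp_deriv[OF this assms(2)] show ?thesis
    unfolding f_of_eq by (rule DERIV_imp_deriv)
qed

lemma logbranch_eq:
  assumes holo: "\<phi> holomorphic_on Disk" and z: "z \<in> Disk"
  shows "logderiv_branch (f_of \<phi>) z = Lp \<phi> z"
proof -
  define P where "P g \<longleftrightarrow> g holomorphic_on Disk \<and> g 0 = 0 \<and>
                           (\<forall>z\<in>Disk. exp (g z) = deriv (f_of \<phi>) z)" for g
  have "P (Lp \<phi>)" unfolding P_def using Lp_holo[OF holo] Lp_0 f_of_deriv[OF holo] by auto
  then have Pg: "P (logderiv_branch (f_of \<phi>))"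
    unfolding logderiv_branch_def P_def[symmetric] by (rule someI[where P=P])
  define g where "g = logderiv_branch (f_of \<phi>)"
  define h where "h z = g z - Lp \<phi> z" for z
  have hholo: "h holomorphic_on Disk" using Pg Lp_holo[OF holo] unfolding h_def g_def P_def
    by (intro holomorphic_intros) auto
  have h1: "exp (h w) = 1" if "w \<in> Disk" for w
    using Pg f_of_deriv[OF holo that] that unfolding h_def g_def P_def by (auto simp: exp_diff)
  have hd: "(h has_field_derivative 0) (at w within Disk)" if w: "w \<in> Disk" for w
  proof -
    obtain D where D: "(h has_field_derivative D) (at w)"
      using hholo w holomorphic_on_imp_differentiable_at field_differentiable_def by blast
    have ed: "((\<lambda>x. exp (h x)) has_field_derivative exp (h w) * D) (at w)"
      using DERIV_exp D DERIV_chain2 by blast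
    then have "((\<lambda>x. 1) has_field_derivative D) (at w)"
    proof -
      have "((\<lambda>x. 1) has_field_derivative exp (h w) * D) (at w)"
        by (rule has_field_derivative_transform_within_open[OF ed open_ball w]) (simp add: h1)
      then show ?thesis using h1[OF w] by simp
    qed
    then have "D = 0" using DERIV_const DERIV_unique by blast
    then show ?thesis using D has_field_derivative_at_within by blast
  qed
  obtain c where c: "\<forall>x\<in>Disk. h x = c"
    using has_field_derivative_zero_constant[OF convex_ball hd] by blast
  have "h 0 = 0" using Pg Lp_0 unfolding h_def g_def P_def by simp
  then have "c = 0" using c by simp
  then show ?thesis using c z unfolding h_def g_def by simp
qed


lemma Lp_bound:
  assumes holo: "\<kappa> holomorphic_on Disk" and z: "z \<in> Disk" and d: "d \<ge> 0"
    and B: "\<forall>w\<in>Disk. cmod (\<kappa> w) * (1 - (cmod w)\<^sup>2) \<le> d"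
  shows "cmod (Lp \<kappa> z) \<le> d * (- ln (1 - cmod z))"
proof -
  define r where "r = cmod z"
  have r: "0 \<le> r" "r < 1" using z by (auto simp: r_def)
  have seg: "closed_segment 0 z \<subseteq> Disk"
    using z convex_ball[of "0::complex" 1] by (simp add: closed_segment_subset)
  have "continuous_on (closed_segment 0 z) \<kappa>"
    using holo seg holomorphic_on_imp_continuous_on continuous_on_subset by blast
  then have "\<kappa> contour_integrable_on linepath 0 z"
    by (rule contour_integrable_continuous_linepath)
  then have "(\<kappa> has_contour_integral Lp \<kappa> z) (linepath 0 z)"
    unfolding Lp_def by (rule has_contour_integral_integral)
  then have hi: "((\<lambda>t. \<kappa> (linepath 0 z t) * (z - 0)) has_integral Lp \<kappa> z) {0..1}"
    by (simp add: has_contour_integral_linepath)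
  have der: "((\<lambda>t. - d * ln (1 - t * r)) has_vector_derivative d * r / (1 - t * r)) (at t within {0..1})"
    if t: "t \<in> {0..1}" for t
  proof -
    have "t * r \<le> r" using t r by (simp add: mult_left_le_one_le)
    then have pos: "1 - t * r > 0" using r by linarith
    have "((\<lambda>t. - d * ln (1 - t * r)) has_real_derivative (- d) * ((0 - (1 * r)) / (1 - t * r))) (at t)"
      using pos by (intro derivative_eq_intros) auto
    then show ?thesis
      by (simp add: has_real_derivative_iff_has_vector_derivative has_vector_derivative_at_within)
  qed
  have G: "((\<lambda>t. d * r / (1 - t * r)) has_integral (d * (- ln (1 - r)))) {0..1}"
    using fundamental_theorem_of_calculus[OF _ der] by simp
  have pt: "norm (\<kappa> (linepath 0 z t) * (z - 0)) \<le> d * r / (1 - t * r)" if t: "t \<in> {0..1}" for t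
  proof -
    have tr: "0 \<le> t * r" "t * r \<le> r" using t r by (auto simp: mult_left_le_one_le)
    then have pos: "1 - t * r > 0" using r by linarith
    have w: "linepath 0 z t = t *\<^sub>R z" by (simp add: linepath_def)
    have cw: "cmod (linepath 0 z t) = t * r" using t by (simp add: w r_def)
    have wD: "linepath 0 z t \<in> Disk" using seg t linepath_in_path[of t 0 z] by auto
    have "(t * r)\<^sup>2 \<le> t * r" using tr r by (simp add: power2_eq_square mult_left_le_one_le)
    then have "cmod (\<kappa> (linepath 0 z t)) * (1 - t * r) \<le> cmod (\<kappa> (linepath 0 z t)) * (1 - (t * r)\<^sup>2)"
      by (intro mult_left_mono) auto
    also have "\<dots> \<le> d" using B wD unfolding cw[symmetric] by blast
    finally have "cmod (\<kappa> (linepath 0 z t)) \<le> d / (1 - t * r)" using pos by (simp add: field_simps)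
    then have "cmod (\<kappa> (linepath 0 z t)) * r \<le> d / (1 - t * r) * r" using r by (intro mult_right_mono) auto
    then show ?thesis by (simp add: norm_mult r_def[symmetric])
  qed
  have "norm (integral {0..1} (\<lambda>t. \<kappa> (linepath 0 z t) * (z - 0))) \<le> integral {0..1} (\<lambda>t. d * r / (1 - t * r))"
    by (rule integral_norm_bound_integral) (use hi G pt in auto)
  moreover have "integral {0..1} (\<lambda>t. \<kappa> (linepath 0 z t) * (z - 0)) = Lp \<kappa> z"
    using hi by (rule integral_unique)
  moreover have "integral {0..1} (\<lambda>t. d * r / (1 - t * r)) = d * (- ln (1 - r))"
    using G by (rule integral_unique)
  ultimately show ?thesis by (simp add: r_def)
qed


lemma Lp_integrable:
  assumes holo: "\<kappa> holomorphic_on Disk" and z: "z \<in> Disk"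
  shows "\<kappa> contour_integrable_on linepath 0 z"
proof -
  have seg: "closed_segment 0 z \<subseteq> Disk"
    using z convex_ball[of "0::complex" 1] by (simp add: closed_segment_subset)
  have "continuous_on (closed_segment 0 z) \<kappa>"
    using holo seg holomorphic_on_imp_continuous_on continuous_on_subset by blast
  then show ?thesis by (rule contour_integrable_continuous_linepath)
qed

lemma Lp_diff:
  assumes "\<phi> holomorphic_on Disk" "\<psi> holomorphic_on Disk" "z \<in> Disk"
  shows "Lp \<phi> z - Lp \<psi> z = Lp (\<lambda>w. \<phi> w - \<psi> w) z"
  unfolding Lp_def using contour_integral_diff[OF Lp_integrable[OF assms(1,3)] Lp_integrable[OF assms(2,3)]]
  by simp

lemma deriv_pow_eq:
  assumes "\<phi> holomorphic_on Disk" "z \<in> Disk"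
  shows "deriv_pow (f_of \<phi>) \<tau> z = exp (\<tau> * Lp \<phi> z)"
  unfolding deriv_pow_def using logbranch_eq[OF assms] by simp

lemma pt_compare:
  assumes h1: "\<phi> holomorphic_on Disk" and h2: "\<psi> holomorphic_on Disk" and d: "d \<ge> 0"
    and B: "\<forall>w\<in>Disk. cmod (\<phi> w - \<psi> w) * (1 - (cmod w)\<^sup>2) \<le> d" and z: "z \<in> Disk"
  shows "cmod (deriv_pow (f_of \<phi>) \<tau> z) \<le> cmod (deriv_pow (f_of \<psi>) \<tau> z) * exp (cmod \<tau> * d * (- ln (1 - cmod z)))"
proof -
  have hd: "(\<lambda>w. \<phi> w - \<psi> w) holomorphic_on Disk" using h1 h2 by (intro holomorphic_intros)
  have bd: "cmod (Lp \<phi> z - Lp \<psi> z) \<le> d * (- ln (1 - cmod z))"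
    using Lp_bound[OF hd z d B] Lp_diff[OF h1 h2 z] by simp
  have "Re (\<tau> * Lp \<phi> z) - Re (\<tau> * Lp \<psi> z) = Re (\<tau> * (Lp \<phi> z - Lp \<psi> z))"
    by (simp add: algebra_simps)
  also have "\<dots> \<le> cmod (\<tau> * (Lp \<phi> z - Lp \<psi> z))" by (rule complex_Re_le_cmod)
  also have "\<dots> = cmod \<tau> * cmod (Lp \<phi> z - Lp \<psi> z)" by (simp add: norm_mult)
  also have "\<dots> \<le> cmod \<tau> * (d * (- ln (1 - cmod z)))" using bd by (intro mult_left_mono) auto
  finally have "Re (\<tau> * Lp \<phi> z) \<le> Re (\<tau> * Lp \<psi> z) + cmod \<tau> * d * (- ln (1 - cmod z))"
    by simp
  then have "exp (Re (\<tau> * Lp \<phi> z)) \<le> exp (Re (\<tau> * Lp \<psi> z) + cmod \<tau> * d * (- ln (1 - cmod z)))"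
    by simp
  then show ?thesis
    unfolding deriv_pow_eq[OF h1 z] deriv_pow_eq[OF h2 z] norm_exp_eq_Re exp_add[symmetric] .
qed

lemma circ_in_disk:
  assumes "0 \<le> r" "r < 1"
  shows "complex_of_real r * cis \<theta> \<in> Disk" "cmod (complex_of_real r * cis \<theta>) = r"
  using assms by (auto simp: norm_mult)

lemma integrand_cont:
  assumes h: "\<phi> holomorphic_on Disk" and r: "0 \<le> r" "r < 1"
  shows "continuous_on {-pi..pi} (\<lambda>\<theta>. cmod (deriv_pow (f_of \<phi>) \<tau> (complex_of_real r * cis \<theta>)))"
proof -
  have c1: "continuous_on Disk (\<lambda>z. cmod (exp (\<tau> * Lp \<phi> z)))"
    using holomorphic_on_imp_continuous_on[OF Lp_holo[OF h]] by (intro continuous_intros)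
  have c2: "continuous_on {-pi..pi} (\<lambda>\<theta>. complex_of_real r * cis \<theta>)"
    by (intro continuous_intros)
  have "continuous_on {-pi..pi} (\<lambda>\<theta>. cmod (exp (\<tau> * Lp \<phi> (complex_of_real r * cis \<theta>))))"
  proof -
    have "(\<lambda>\<theta>. complex_of_real r * cis \<theta>) ` {-pi..pi} \<subseteq> Disk" using circ_in_disk[OF r] by auto
    from continuous_on_compose2[OF c1 c2 this] show ?thesis .
  qed
  then show ?thesis
    by (rule continuous_on_cong[THEN iffD1, rotated 2]) (auto simp: deriv_pow_eq[OF h circ_in_disk(1)[OF r]])
qed

lemma integral_pos:
  assumes h: "\<phi> holomorphic_on Disk" and r: "0 \<le> r" "r < 1"
  shows "integral {-pi..pi} (\<lambda>\<theta>. cmod (deriv_pow (f_of \<phi>) \<tau> (complex_of_real r * cis \<theta>))) > 0"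
proof -
  let ?f = "\<lambda>\<theta>. cmod (deriv_pow (f_of \<phi>) \<tau> (complex_of_real r * cis \<theta>))"
  obtain x where x: "x \<in> {-pi..pi}" "\<forall>y\<in>{-pi..pi}. ?f x \<le> ?f y"
    using continuous_attains_inf[OF compact_Icc _ integrand_cont[OF h r]] by force
  have pos: "?f x > 0" by (simp add: deriv_pow_def)
  have "integral {-pi..pi} (\<lambda>\<theta>. ?f x) \<le> integral {-pi..pi} ?f"
    using x integrable_continuous_interval[OF integrand_cont[OF h r]] by (intro integral_le) auto
  moreover have "integral {-pi..pi} (\<lambda>\<theta>. ?f x) > 0" using pos pi_gt_zero by simp
  ultimately show ?thesis by linarith
qed


lemma beta_le:
  assumes h1: "\<phi> holomorphic_on Disk" and h2: "\<psi> holomorphic_on Disk" and d: "d \<ge> 0"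
    and B: "\<forall>w\<in>Disk. cmod (\<phi> w - \<psi> w) * (1 - (cmod w)\<^sup>2) \<le> d"
  shows "beta (f_of \<phi>) \<tau> \<le> beta (f_of \<psi>) \<tau> + ereal (cmod \<tau> * d)"
proof -
  define I where "I \<kappa> r = integral {-pi..pi} (\<lambda>\<theta>. cmod (deriv_pow (f_of \<kappa>) \<tau> (complex_of_real r * cis \<theta>)))"
    for \<kappa> r
  have ev: "eventually (\<lambda>r. r \<in> {0<..<1}) (at_left (1::real))" by (rule eventually_at_left_real) simp
  have key: "ln (I \<phi> r) / \<bar>ln (1 - r)\<bar> \<le> ln (I \<psi> r) / \<bar>ln (1 - r)\<bar> + cmod \<tau> * d"
    if r: "r \<in> {0<..<1}" for r
  proof -
    have r0: "0 \<le> r" "r < 1" using r by auto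
    define K where "K = exp (cmod \<tau> * d * (- ln (1 - r)))"
    have int2: "(\<lambda>\<theta>. K * cmod (deriv_pow (f_of \<psi>) \<tau> (complex_of_real r * cis \<theta>))) integrable_on {-pi..pi}"
      by (intro integrable_continuous_interval continuous_intros integrand_cont[OF h2 r0])
    have int1: "(\<lambda>\<theta>. cmod (deriv_pow (f_of \<phi>) \<tau> (complex_of_real r * cis \<theta>))) integrable_on {-pi..pi}"
      by (intro integrable_continuous_interval integrand_cont[OF h1 r0])
    have "I \<phi> r \<le> integral {-pi..pi} (\<lambda>\<theta>. K * cmod (deriv_pow (f_of \<psi>) \<tau> (complex_of_real r * cis \<theta>)))"
      unfolding I_def
    proof (rule integral_le[OF int1 int2])
      fix \<theta> assume "\<theta> \<in> {-pi..pi}"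
      show "cmod (deriv_pow (f_of \<phi>) \<tau> (complex_of_real r * cis \<theta>)) \<le> K * cmod (deriv_pow (f_of \<psi>) \<tau> (complex_of_real r * cis \<theta>))"
        using pt_compare[OF h1 h2 d B circ_in_disk(1)[OF r0], of \<tau> \<theta>] circ_in_disk(2)[OF r0]
        by (simp add: K_def mult.commute)
    qed
    also have "\<dots> = K * I \<psi> r" unfolding I_def by simp
    finally have le: "I \<phi> r \<le> K * I \<psi> r" .
    have p1: "I \<phi> r > 0" "I \<psi> r > 0" unfolding I_def using integral_pos[OF h1 r0] integral_pos[OF h2 r0] by auto
    have Kp: "K > 0" by (simp add: K_def)
    have "ln (I \<phi> r) \<le> ln (K * I \<psi> r)" using le p1 Kp by simp
    also have "\<dots> = ln (I \<psi> r) + cmod \<tau> * d * (- ln (1 - r))"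
      using p1 Kp by (simp add: ln_mult K_def)
    finally have lle: "ln (I \<phi> r) \<le> ln (I \<psi> r) + cmod \<tau> * d * (- ln (1 - r))" .
    have "ln (1 - r) < 0" using r by simp
    then have L: "\<bar>ln (1 - r)\<bar> = - ln (1 - r)" "- ln (1 - r) > 0" by auto
    have "ln (I \<phi> r) / (- ln (1 - r)) \<le> (ln (I \<psi> r) + cmod \<tau> * d * (- ln (1 - r))) / (- ln (1 - r))"
      using lle L(2) by (intro divide_right_mono) auto
    also have "\<dots> = ln (I \<psi> r) / (- ln (1 - r)) + cmod \<tau> * d"
      using L(2) by (simp add: field_simps)
    finally show ?thesis unfolding L(1) .
  qed
  have "beta (f_of \<phi>) \<tau> = Limsup (at_left 1) (\<lambda>r. ereal (ln (I \<phi> r) / \<bar>ln (1 - r)\<bar>))"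
    unfolding beta_def I_def ..
  also have "\<dots> \<le> Limsup (at_left 1) (\<lambda>r. ereal (ln (I \<psi> r) / \<bar>ln (1 - r)\<bar>) + ereal (cmod \<tau> * d))"
    by (intro Limsup_mono eventually_mono[OF ev]) (use key in auto)
  also have "\<dots> = Limsup (at_left 1) (\<lambda>r. ereal (ln (I \<psi> r) / \<bar>ln (1 - r)\<bar>)) + ereal (cmod \<tau> * d)"
    by (rule Limsup_add_ereal_right) auto
  also have "Limsup (at_left 1) (\<lambda>r. ereal (ln (I \<psi> r) / \<bar>ln (1 - r)\<bar>)) = beta (f_of \<psi>) \<tau>"
    unfolding beta_def I_def ..
  finally show ?thesis .
qed

lemma E1_pt:
  assumes "E1norm \<kappa> < ereal \<delta>" "w \<in> Disk"
  shows "cmod (\<kappa> w) * (1 - (cmod w)\<^sup>2) \<le> \<delta>"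
proof -
  have "ereal (cmod (\<kappa> w) * (1 - (cmod w)\<^sup>2)) \<le> E1norm \<kappa>"
    unfolding E1norm_def using assms(2) by (rule SUP_upper)
  then have "ereal (cmod (\<kappa> w) * (1 - (cmod w)\<^sup>2)) < ereal \<delta>" using assms(1) by (rule le_less_trans)
  then show ?thesis by simp
qed

theorem theorem3:
  fixes \<tau> :: complex
  shows "\<forall>\<phi>\<in>TT_closure. \<forall>U. open U \<and> beta (f_of \<phi>) \<tau> \<in> U \<longrightarrow>
           (\<exists>\<delta>>0. \<forall>\<psi>\<in>TT_closure. E1norm (\<lambda>z. \<psi> z - \<phi> z) < ereal \<delta> \<longrightarrow>
                     beta (f_of \<psi>) \<tau> \<in> U)"
proof (intro ballI allI impI)
  fix \<phi> U assume \<phi>: "\<phi> \<in> TT_closure" and U: "open U \<and> beta (f_of \<phi>) \<tau> \<in> U"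
  have h1: "\<phi> holomorphic_on Disk" using \<phi> by (simp add: TT_closure_def E1_def)
  have cmp: "beta (f_of \<phi>) \<tau> \<le> beta (f_of \<psi>) \<tau> + ereal (cmod \<tau> * \<delta>) \<and>
             beta (f_of \<psi>) \<tau> \<le> beta (f_of \<phi>) \<tau> + ereal (cmod \<tau> * \<delta>)"
    if \<psi>: "\<psi> \<in> TT_closure" and dp: "\<delta> > 0" and n: "E1norm (\<lambda>z. \<psi> z - \<phi> z) < ereal \<delta>" for \<psi> \<delta>
  proof -
    have h2: "\<psi> holomorphic_on Disk" using \<psi> by (simp add: TT_closure_def E1_def)
    have B1: "\<forall>w\<in>Disk. cmod (\<psi> w - \<phi> w) * (1 - (cmod w)\<^sup>2) \<le> \<delta>"
      using E1_pt[OF n] by blast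
    have B2: "\<forall>w\<in>Disk. cmod (\<phi> w - \<psi> w) * (1 - (cmod w)\<^sup>2) \<le> \<delta>"
      using B1 by (simp add: norm_minus_commute)
    show ?thesis using beta_le[OF h1 h2 _ B2] beta_le[OF h2 h1 _ B1] dp by auto
  qed
  show "\<exists>\<delta>>0. \<forall>\<psi>\<in>TT_closure. E1norm (\<lambda>z. \<psi> z - \<phi> z) < ereal \<delta> \<longrightarrow> beta (f_of \<psi>) \<tau> \<in> U"
  proof (cases "beta (f_of \<phi>) \<tau>" rule: ereal_cases)
    case (real x)
    have "open (ereal -` U)" using U by (blast elim: ereal_openE)
    moreover have "x \<in> ereal -` U" using U real by simp
    ultimately obtain e where e: "e > 0" "\<And>y. dist y x < e \<Longrightarrow> y \<in> ereal -` U"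
      unfolding open_dist by blast
    define \<delta> where "\<delta> = e / (2 * (cmod \<tau> + 1))"
    have "2 * (cmod \<tau> + 1) > 0" by (smt (verit) norm_ge_zero)
    then have dp: "\<delta> > 0" using e unfolding \<delta>_def by (intro divide_pos_pos)
    have ce: "cmod \<tau> * \<delta> < e"
    proof -
      have "cmod \<tau> * \<delta> \<le> (cmod \<tau> + 1) * \<delta>" using dp by (intro mult_right_mono) auto
      also have "\<dots> = e / 2"
      proof -
        have "cmod \<tau> + 1 \<noteq> 0" by (smt (verit) norm_ge_zero)
        then show ?thesis unfolding \<delta>_def by (simp add: field_simps)
      qed
      finally show ?thesis using e by simp
    qed
    show ?thesis
    proof (intro exI[of _ \<delta>] conjI ballI impI dp)
      fix \<psi> assume \<psi>: "\<psi> \<in> TT_closure" and n: "E1norm (\<lambda>z. \<psi> z - \<phi> z) < ereal \<delta>"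
      note c = cmp[OF \<psi> dp n]
      show "beta (f_of \<psi>) \<tau> \<in> U"
      proof (cases "beta (f_of \<psi>) \<tau>" rule: ereal_cases)
        case (real y)
        have "\<bar>y - x\<bar> \<le> cmod \<tau> * \<delta>" using c real \<open>beta (f_of \<phi>) \<tau> = ereal x\<close> by auto
        then have "dist y x < e" using ce by (simp add: dist_real_def)
        then show ?thesis using e real by auto
      qed (use c real in auto)
    qed
  next
    case PInf
    show ?thesis
    proof (intro exI[of _ 1] conjI ballI impI)
      fix \<psi> assume \<psi>: "\<psi> \<in> TT_closure" and n: "E1norm (\<lambda>z. \<psi> z - \<phi> z) < ereal 1"
      have "beta (f_of \<psi>) \<tau> = \<infinity>" using cmp[OF \<psi> _ n] PInf by (cases "beta (f_of \<psi>) \<tau>") auto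
      then show "beta (f_of \<psi>) \<tau> \<in> U" using U PInf by simp
    qed simp
  next
    case MInf
    show ?thesis
    proof (intro exI[of _ 1] conjI ballI impI)
      fix \<psi> assume \<psi>: "\<psi> \<in> TT_closure" and n: "E1norm (\<lambda>z. \<psi> z - \<phi> z) < ereal 1"
      have "beta (f_of \<psi>) \<tau> = -\<infinity>" using cmp[OF \<psi> _ n] MInf by (cases "beta (f_of \<psi>) \<tau>") auto
      then show "beta (f_of \<psi>) \<tau> \<in> U" using U MInf by simp
    qed simp
  qed
qed

end
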